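(* Let $(m_\epsilon)_{\epsilon\in(0,1)}$ be a family of dimensions satisfying Assumption P with constants $\epsilon_\theta$ and $K$. Then for all $\epsilon\in(0,\epsilon_\theta)$ and all $c\in(0,1/(8K))$, $$\mathbb E_{\theta^\circ}P_{\vartheta^{m_\epsilon}|Y}\Big(\|\vartheta^{m_\epsilon}-\theta^\circ\|^2>(4+\tfrac{11}{2}K)[b_{m_\epsilon}\vee\bar\sigma_{m_\epsilon}]\Big)\le2\exp(-m_\epsilon/36),$$ $$\mathbb E_{\theta^\circ}P_{\vartheta^{m_\epsilon}|Y}\Big(\|\vartheta^{m_\epsilon}-\theta^\circ\|^2<(1-8cK)[b_{m_\epsilon}\vee\bar\sigma_{m_\epsilon}]\Big)\le2\exp(-c^2m_\epsilon/2).$$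
   Context: Let $\ell^2$ be the space of square-summable real sequences with norm $\|\cdot\|$. Fix a bounded real sequence $\lambda=(\lambda_j)_{j\ge1}$ with $\lambda_j\ne0$ for all $j$, a noise level $\epsilon\in(0,1)$ and a true parameter $\theta^\circ\in\ell^2$. The data $Y=(Y_j)_{j\ge1}$ satisfy $Y_j=\lambda_j\theta^\circ_j+\sqrt\epsilon\,\xi_j$ with $\xi_j$ i.i.d. $N(0,1)$; $\mathbb E_{\theta^\circ}$, $P_{\theta^\circ}$ denote expectation and probability under this law. Fix prior means $\eta=(\eta_j)_{j\ge1}$ with $\theta^\circ-\eta\in\ell^2$ and prior variances $\tau_j\in(0,\infty)$ (possibly depending on $\epsilon$). For $m\in\mathbb N$ the sieve prior $P_{\vartheta^m}$ is the law of $\vartheta^m=(\vartheta^m_j)_{j\ge1}$ with independent coordinates, $\vartheta^m_j\sim N(\eta_j,\tau_j)$ for $j\le m$ and $\vartheta^m_j=\eta_j$ a.s. for $j>m$, in the model $Y_j=\lambda_j\vartheta^m_j+\sqrt\epsilon\xi_j$ with $\vartheta^m$ independent of $(\xi_j)$. Put $\sigma_j:=(\lambda_j^2\epsilon^{-1}+\tau_j^{-1})^{-1}$ and $\theta^Y_j:=\sigma_j(\tau_j^{-1}\eta_j+\lambda_j\epsilon^{-1}Y_j)$. The posterior $P_{\vartheta^m|Y}$ makes the coordinates independent with $\vartheta^m_j\sim N(\theta^Y_j,\sigma_j)$ for $j\le m$ and $\vartheta^m_j=\eta_j$ for $j>m$; the Bayes estimator is $\hat\theta^m:=\mathbb E[\vartheta^m|Y]$,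 i.e. $\hat\theta^m_j=\theta^Y_j$ for $j\le m$, $\hat\theta^m_j=\eta_j$ for $j>m$. Define $b_m:=\sum_{j>m}(\theta^\circ_j-\eta_j)^2$, $\bar\sigma_m:=\sum_{j=1}^m\sigma_j$, $\sigma_{(m)}:=\max_{1\le j\le m}\sigma_j$, $r_m:=\sum_{j=1}^m\sigma_j^2\tau_j^{-2}(\eta_j-\theta^\circ_j)^2$ (the quantities involving $\sigma$ depend on $\epsilon$). Assumption P for a family $(m_\epsilon)_{\epsilon\in(0,1)}\subset\mathbb N$: there exist constants $\epsilon_\theta\in(0,1)$ and $K\in[1,\infty)$ (depending on $\theta^\circ,\lambda,\eta,\tau$) such that $\sup_{0<\epsilon<\epsilon_\theta}(r_{m_\epsilon}\vee m_\epsilon\sigma_{(m_\epsilon)})/(b_{m_\epsilon}\vee\bar\sigma_{m_\epsilon})\le K$. *)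

theory Defs
  imports "HOL-Probability.Probability"
begin

text \<open>Coordinates are indexed from 0 (coordinate j here = coordinate j+1 of the paper).
  The sieve of dimension m randomises the coordinates j < m.\<close>

definition post_var :: "real \<Rightarrow> (nat \<Rightarrow> real) \<Rightarrow> (nat \<Rightarrow> real) \<Rightarrow> nat \<Rightarrow> real" where
  "post_var eps lam tau j = inverse ((lam j)\<^sup>2 / eps + inverse (tau j))"

definition post_mean :: "real \<Rightarrow> (nat \<Rightarrow> real) \<Rightarrow> (nat \<Rightarrow> real) \<Rightarrow> (nat \<Rightarrow> real)
    \<Rightarrow> (nat \<Rightarrow> real) \<Rightarrow> nat \<Rightarrow> real" where
  "post_mean eps lam eta tau Y j =
     post_var eps lam tau j * (eta j / tau j + lam j * Y j / eps)"

definition data_measure :: "real \<Rightarrow> (nat \<Rightarrow> real) \<Rightarrow> (nat \<Rightarrow> real) \<Rightarrow> (nat \<Rightarrow> real) measure" where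
  "data_measure eps lam theta =
     (\<Pi>\<^sub>M j\<in>UNIV. density lborel (normal_density (lam j * theta j) (sqrt eps)))"

definition post_measure :: "real \<Rightarrow> (nat \<Rightarrow> real) \<Rightarrow> (nat \<Rightarrow> real) \<Rightarrow> (nat \<Rightarrow> real) \<Rightarrow> nat
    \<Rightarrow> (nat \<Rightarrow> real) \<Rightarrow> (nat \<Rightarrow> real) measure" where
  "post_measure eps lam eta tau m Y =
     (\<Pi>\<^sub>M j\<in>UNIV. if j < m
        then density lborel (normal_density (post_mean eps lam eta tau Y j) (sqrt (post_var eps lam tau j)))
        else return borel (eta j))"

definition sqdist2 :: "(nat \<Rightarrow> real) \<Rightarrow> (nat \<Rightarrow> real) \<Rightarrow> real" where
  "sqdist2 x y = (\<Sum>j. (x j - y j)\<^sup>2)"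

definition bias :: "(nat \<Rightarrow> real) \<Rightarrow> (nat \<Rightarrow> real) \<Rightarrow> nat \<Rightarrow> real" where
  "bias theta eta m = (\<Sum>j. (theta (j + m) - eta (j + m))\<^sup>2)"

definition sigma_bar :: "real \<Rightarrow> (nat \<Rightarrow> real) \<Rightarrow> (nat \<Rightarrow> real) \<Rightarrow> nat \<Rightarrow> real" where
  "sigma_bar eps lam tau m = (\<Sum>j<m. post_var eps lam tau j)"

text \<open>Maximum of sigma_j over j < m (only used multiplied by m, so the value at m = 0 is irrelevant).\<close>
definition sigma_max :: "real \<Rightarrow> (nat \<Rightarrow> real) \<Rightarrow> (nat \<Rightarrow> real) \<Rightarrow> nat \<Rightarrow> real" where
  "sigma_max eps lam tau m = (MAX j\<in>{..<m}. post_var eps lam tau j)"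

definition r_term :: "real \<Rightarrow> (nat \<Rightarrow> real) \<Rightarrow> (nat \<Rightarrow> real) \<Rightarrow> (nat \<Rightarrow> real) \<Rightarrow> (nat \<Rightarrow> real) \<Rightarrow> nat \<Rightarrow> real" where
  "r_term eps lam theta eta tau m =
     (\<Sum>j<m. (post_var eps lam tau j)\<^sup>2 * (inverse (tau j))\<^sup>2 * (eta j - theta j)\<^sup>2)"

definition assumption_P :: "(nat \<Rightarrow> real) \<Rightarrow> (nat \<Rightarrow> real) \<Rightarrow> (nat \<Rightarrow> real) \<Rightarrow> (real \<Rightarrow> nat \<Rightarrow> real)
    \<Rightarrow> (real \<Rightarrow> nat) \<Rightarrow> real \<Rightarrow> real \<Rightarrow> bool" where
  "assumption_P lam theta eta tau m eps_theta K \<longleftrightarrow>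
     0 < eps_theta \<and> eps_theta < 1 \<and> 1 \<le> K \<and>
     (\<forall>eps\<in>{0<..<eps_theta}.
        max (r_term eps lam theta eta (tau eps) (m eps)) (real (m eps) * sigma_max eps lam (tau eps) (m eps))
        / max (bias theta eta (m eps)) (sigma_bar eps lam (tau eps) (m eps)) \<le> K)"

end

theory Submission
  imports Defs
begin


lemma gauss_exp_id0:
  fixes mu S a b u x q :: real
  assumes S: "0 < S" and q: "0 < q" and qd: "q = 1 - 2 * u * b\<^sup>2 * S"
  shows "u * (a + b * x)\<^sup>2 - (x - mu)\<^sup>2 / (2 * S) =
    u * (a + b * mu)\<^sup>2 / q - (x - (mu + 2 * u * (a + b * mu) * b * S / q))\<^sup>2 / (2 * (S / q))"
proof -
  have poly: "2*S*q*u*(a+b*x)\<^sup>2 - q*(x-mu)\<^sup>2 = 2*S*u*(a+b*mu)\<^sup>2 - (q*(x-mu) - 2*u*(a+b*mu)*b*S)\<^sup>2"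
    using qd by algebra
  have h: "q * (x - (mu + 2 * u * (a + b * mu) * b * S / q)) = q*(x-mu) - 2*u*(a+b*mu)*b*S"
    using q by (simp add: field_simps)
  have h2: "(x - (mu + 2 * u * (a + b * mu) * b * S / q))\<^sup>2 / (2 * (S / q)) = (q*(x-mu) - 2*u*(a+b*mu)*b*S)\<^sup>2 / (2*S*q)"
    unfolding h[symmetric] using q S by (simp add: field_simps power2_eq_square)
  have "u*(a+b*x)\<^sup>2 - (x-mu)\<^sup>2/(2*S) = (2*S*q*u*(a+b*x)\<^sup>2 - q*(x-mu)\<^sup>2)/(2*S*q)"
    using S q by (simp add: field_simps)
  also have "\<dots> = (2*S*u*(a+b*mu)\<^sup>2 - (q*(x-mu) - 2*u*(a+b*mu)*b*S)\<^sup>2)/(2*S*q)"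
    using poly by simp
  also have "\<dots> = u*(a+b*mu)\<^sup>2/q - (q*(x-mu) - 2*u*(a+b*mu)*b*S)\<^sup>2/(2*S*q)"
    using S q by (simp add: diff_divide_distrib)
  finally show ?thesis unfolding h2 .
qed

lemma nn_integral_normal_density: "0 < sg \<Longrightarrow> (\<integral>\<^sup>+x. ennreal (normal_density mu sg x) \<partial>lborel) = 1"
  by (subst nn_integral_eq_integral) auto

lemma gauss_mgf:
  fixes mu sg a b u :: real
  assumes sg: "0 < sg" and q: "0 < 1 - 2 * u * b\<^sup>2 * sg\<^sup>2"
  shows "(\<integral>\<^sup>+x. ennreal (exp (u * (a + b * x)\<^sup>2)) \<partial>density lborel (normal_density mu sg))
    = ennreal (exp (u * (a + b * mu)\<^sup>2 / (1 - 2 * u * b\<^sup>2 * sg\<^sup>2)) / sqrt (1 - 2 * u * b\<^sup>2 * sg\<^sup>2))"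
proof -
  define q where "q = 1 - 2 * u * b\<^sup>2 * sg\<^sup>2"
  have q0: "0 < q" using q by (simp add: q_def)
  define c where "c = mu + 2 * u * (a + b * mu) * b * sg\<^sup>2 / q"
  define s where "s = sg / sqrt q"
  have s0: "0 < s" using sg q0 by (simp add: s_def)
  have s2: "s\<^sup>2 = sg\<^sup>2 / q" using q0 by (simp add: s_def power_divide)
  define C where "C = exp (u * (a + b * mu)\<^sup>2 / q) / sqrt q"
  have C0: "0 \<le> C" using q0 by (simp add: C_def)
  have pt: "normal_density mu sg x * exp (u * (a + b * x)\<^sup>2) = C * normal_density c s x" for x
  proof -
    have e: "u * (a + b * x)\<^sup>2 - (x - mu)\<^sup>2 / (2 * sg\<^sup>2) =
      u * (a + b * mu)\<^sup>2 / q - (x - c)\<^sup>2 / (2 * s\<^sup>2)"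
      unfolding s2 c_def by (rule gauss_exp_id0) (use sg q0 in \<open>auto simp: q_def\<close>)
    have r: "sqrt (2 * pi * s\<^sup>2) = sqrt (2 * pi * sg\<^sup>2) / sqrt q"
      using q0 by (simp add: s2 real_sqrt_divide)
    have "normal_density mu sg x * exp (u * (a + b * x)\<^sup>2)
       = 1 / sqrt (2 * pi * sg\<^sup>2) * exp (u * (a + b * x)\<^sup>2 - (x - mu)\<^sup>2 / (2 * sg\<^sup>2))"
      by (simp add: normal_density_def exp_diff exp_minus field_simps)
    also have "\<dots> = 1 / sqrt (2 * pi * sg\<^sup>2) * exp (u * (a + b * mu)\<^sup>2 / q) * exp (- (x - c)\<^sup>2 / (2 * s\<^sup>2))"
      unfolding e by (simp add: exp_diff exp_minus field_simps)
    also have "\<dots> = C * normal_density c s x"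
      unfolding normal_density_def C_def r using q0 sg by (simp add: field_simps)
    finally show ?thesis .
  qed
  have "(\<integral>\<^sup>+x. ennreal (exp (u * (a + b * x)\<^sup>2)) \<partial>density lborel (normal_density mu sg))
     = (\<integral>\<^sup>+x. ennreal (normal_density mu sg x) * ennreal (exp (u * (a + b * x)\<^sup>2)) \<partial>lborel)"
    by (subst nn_integral_density) auto
  also have "\<dots> = (\<integral>\<^sup>+x. ennreal C * ennreal (normal_density c s x) \<partial>lborel)"
    by (intro nn_integral_cong) (simp add: pt C0 ennreal_mult[symmetric])
  also have "\<dots> = ennreal C"
    using s0 by (simp add: nn_integral_cmult nn_integral_normal_density)
  finally show ?thesis by (simp add: C_def q_def)
qed




lemma nn_integral_PiM_prod:
  fixes M :: "nat \<Rightarrow> real measure" and g :: "nat \<Rightarrow> real \<Rightarrow> ennreal"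
  assumes P: "\<And>i. prob_space (M i)" and J: "finite J"
    and g: "\<And>j. j \<in> J \<Longrightarrow> g j \<in> borel_measurable (M j)"
  shows "(\<integral>\<^sup>+x. (\<Prod>j\<in>J. g j (x j)) \<partial>PiM UNIV M) = (\<Prod>j\<in>J. \<integral>\<^sup>+y. g j y \<partial>M j)"
proof -
  interpret product_prob_space M UNIV
    by (simp add: product_prob_space_def product_prob_space_axioms_def product_sigma_finite_def P prob_space_imp_sigma_finite)
  have meas: "(\<lambda>y. \<Prod>j\<in>J. g j (y j)) \<in> borel_measurable (PiM J M)"
    using g by measurable
  have "(\<integral>\<^sup>+x. (\<Prod>j\<in>J. g j (x j)) \<partial>PiM UNIV M) = (\<integral>\<^sup>+x. (\<Prod>j\<in>J. g j (restrict x J j)) \<partial>PiM UNIV M)"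
    by (intro nn_integral_cong prod.cong) auto
  also have "\<dots> = (\<integral>\<^sup>+y. (\<Prod>j\<in>J. g j (y j)) \<partial>distr (PiM UNIV M) (PiM J M) (\<lambda>x. restrict x J))"
    by (rule nn_integral_distr[symmetric]) (auto intro: meas simp del: restrict_apply simp add: measurable_restrict_subset)
  also have "\<dots> = (\<integral>\<^sup>+y. (\<Prod>j\<in>J. g j (y j)) \<partial>PiM J M)"
    by (subst distr_PiM_restrict_finite) (use J in auto)
  also have "\<dots> = (\<Prod>j\<in>J. \<integral>\<^sup>+y. g j y \<partial>M j)"
    by (rule product_nn_integral_prod[OF J g])
  finally show ?thesis .
qed




lemma markov_upper:
  fixes M :: "nat \<Rightarrow> real measure" and f :: "nat \<Rightarrow> real \<Rightarrow> real"
  assumes P: "\<And>i. prob_space (M i)" and L: "0 \<le> L"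
    and f: "\<And>j. j < m \<Longrightarrow> f j \<in> borel_measurable (M j)"
  shows "emeasure (PiM UNIV M) {v \<in> space (PiM UNIV M). T < (\<Sum>j<m. f j (v j)) + b}
    \<le> ennreal (exp (L * (b - T))) * (\<Prod>j<m. \<integral>\<^sup>+x. ennreal (exp (L * f j x)) \<partial>M j)"
proof -
  let ?A = "{v \<in> space (PiM UNIV M). T < (\<Sum>j<m. f j (v j)) + b}"
  have A: "?A \<in> sets (PiM UNIV M)"
    using f by measurable
  have "emeasure (PiM UNIV M) ?A = (\<integral>\<^sup>+v. indicator ?A v \<partial>PiM UNIV M)"
    using A by simp
  also have "\<dots> \<le> (\<integral>\<^sup>+v. ennreal (exp (L * (b - T))) * (\<Prod>j<m. ennreal (exp (L * f j (v j)))) \<partial>PiM UNIV M)"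
  proof (intro nn_integral_mono)
    fix v
    have "(\<Prod>j<m. ennreal (exp (L * f j (v j)))) = ennreal (\<Prod>j<m. exp (L * f j (v j)))"
      by (simp add: prod_ennreal)
    also have "\<dots> = ennreal (exp (L * (\<Sum>j<m. f j (v j))))"
      by (simp add: exp_sum sum_distrib_left)
    finally have e: "(\<Prod>j<m. ennreal (exp (L * f j (v j)))) = ennreal (exp (L * (\<Sum>j<m. f j (v j))))" .
    have "indicator ?A v \<le> ennreal (exp (L * (b - T)) * exp (L * (\<Sum>j<m. f j (v j))))"
    proof (cases "v \<in> ?A")
      case True
      then have "0 \<le> L * ((\<Sum>j<m. f j (v j)) + b - T)" using L by auto
      then have "1 \<le> exp (L * ((\<Sum>j<m. f j (v j)) + b - T))" by simp
      also have "\<dots> = exp (L * (b - T)) * exp (L * (\<Sum>j<m. f j (v j)))"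
        by (simp add: exp_add[symmetric] algebra_simps)
      finally show ?thesis using True by simp
    qed simp
    then show "indicator ?A v \<le> ennreal (exp (L * (b - T))) * (\<Prod>j<m. ennreal (exp (L * f j (v j))))"
      unfolding e by (simp add: ennreal_mult)
  qed
  also have "\<dots> = ennreal (exp (L * (b - T))) * (\<integral>\<^sup>+v. (\<Prod>j<m. ennreal (exp (L * f j (v j)))) \<partial>PiM UNIV M)"
  proof (intro nn_integral_cmult borel_measurable_prod_ennreal)
    fix j assume "j \<in> {..<m}"
    then have "(\<lambda>x. f j (x j)) \<in> borel_measurable (PiM UNIV M)"
      by (intro measurable_compose[OF measurable_component_singleton[of j UNIV M] f]) auto
    then show "(\<lambda>v. ennreal (exp (L * f j (v j)))) \<in> borel_measurable (PiM UNIV M)"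
      by measurable
  qed
  also have "(\<integral>\<^sup>+v. (\<Prod>j<m. ennreal (exp (L * f j (v j)))) \<partial>PiM UNIV M) = (\<Prod>j<m. \<integral>\<^sup>+x. ennreal (exp (L * f j x)) \<partial>M j)"
    using f by (intro nn_integral_PiM_prod P) auto
  finally show ?thesis .
qed

lemma markov_lower:
  fixes M :: "nat \<Rightarrow> real measure" and f :: "nat \<Rightarrow> real \<Rightarrow> real"
  assumes P: "\<And>i. prob_space (M i)" and L: "0 \<le> L"
    and f: "\<And>j. j < m \<Longrightarrow> f j \<in> borel_measurable (M j)"
  shows "emeasure (PiM UNIV M) {v \<in> space (PiM UNIV M). (\<Sum>j<m. f j (v j)) + b < T}
    \<le> ennreal (exp (L * (T - b))) * (\<Prod>j<m. \<integral>\<^sup>+x. ennreal (exp ((- L) * f j x)) \<partial>M j)"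
proof -
  have f': "\<And>j. j < m \<Longrightarrow> (\<lambda>x. - f j x) \<in> borel_measurable (M j)" using f by measurable
  have "{v \<in> space (PiM UNIV M). (\<Sum>j<m. f j (v j)) + b < T} = {v \<in> space (PiM UNIV M). - T < (\<Sum>j<m. - f j (v j)) + - b}"
    by (auto simp: sum_negf)
  also have "emeasure (PiM UNIV M) \<dots> \<le> ennreal (exp (L * (- b - - T))) * (\<Prod>j<m. \<integral>\<^sup>+x. ennreal (exp (L * - f j x)) \<partial>M j)"
    by (rule markov_upper[OF P L f'])
  finally show ?thesis by simp
qed




lemma post_factor_prob:
  assumes "0 < post_var eps lam tau j"
  shows "prob_space (if j < m then density lborel (normal_density (post_mean eps lam eta tau Y j) (sqrt (post_var eps lam tau j)))
        else return borel (eta j))"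
  using assms by (auto intro: prob_space_normal_density prob_space_return)

lemma post_AE:
  assumes pv: "\<And>j. 0 < post_var eps lam tau j"
  shows "AE v in post_measure eps lam eta tau m Y. \<forall>j. m \<le> j \<longrightarrow> v j = eta j"
  unfolding post_measure_def AE_all_countable
proof
  fix j :: nat
  show "AE v in (\<Pi>\<^sub>M j\<in>UNIV. if j < m
        then density lborel (normal_density (post_mean eps lam eta tau Y j) (sqrt (post_var eps lam tau j)))
        else return borel (eta j)). m \<le> j \<longrightarrow> v j = eta j"
  proof (cases "m \<le> j")
    case True
    show ?thesis
      by (rule AE_mp[OF AE_PiM_component[where i=j and P="\<lambda>x. x = eta j"]])
         (use True in \<open>auto simp: post_factor_prob pv AE_return\<close>)
  qed simp
qed

lemma sqdist_split:
  assumes d: "summable (\<lambda>j. (theta j - eta j)\<^sup>2)" and v: "\<forall>j. m \<le> j \<longrightarrow> v j = eta j"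
  shows "sqdist2 v theta = (\<Sum>j<m. (v j - theta j)\<^sup>2) + bias theta eta m"
proof -
  have e: "(\<lambda>j. (v (j + m) - theta (j + m))\<^sup>2) = (\<lambda>j. (theta (j + m) - eta (j + m))\<^sup>2)"
    using v by (auto simp: power2_commute)
  have "summable (\<lambda>j. (theta (j + m) - eta (j + m))\<^sup>2)"
    using summable_iff_shift[of "\<lambda>j. (theta j - eta j)\<^sup>2" m] d by simp
  then have "summable (\<lambda>j. (v (j + m) - theta (j + m))\<^sup>2)" using e by simp
  then have s: "summable (\<lambda>j. (v j - theta j)\<^sup>2)" using summable_iff_shift[of "\<lambda>j. (v j - theta j)\<^sup>2" m] by simp
  show ?thesis
    unfolding sqdist2_def bias_def using suminf_split_initial_segment[OF s, of m] e by simp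
qed

lemma bias_nonneg:
  assumes d: "summable (\<lambda>j. (theta j - eta j)\<^sup>2)"
  shows "0 \<le> bias theta eta m"
  unfolding bias_def
  by (rule suminf_nonneg) (use d summable_iff_shift[of "\<lambda>j. (theta j - eta j)\<^sup>2" m] in auto)

lemma post_tail:
  assumes d: "summable (\<lambda>j. (theta j - eta j)\<^sup>2)"
    and pv: "\<And>j. 0 < post_var eps lam tau j"
    and B: "{v \<in> space (post_measure eps lam eta tau m Y). P ((\<Sum>j<m. (v j - theta j)\<^sup>2) + bias theta eta m)}
       \<in> sets (post_measure eps lam eta tau m Y)"
  shows "emeasure (post_measure eps lam eta tau m Y) {v \<in> space (post_measure eps lam eta tau m Y). P (sqdist2 v theta)}
    \<le> emeasure (post_measure eps lam eta tau m Y)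
        {v \<in> space (post_measure eps lam eta tau m Y). P ((\<Sum>j<m. (v j - theta j)\<^sup>2) + bias theta eta m)}"
  by (rule emeasure_mono_AE[OF _ B], rule AE_mp[OF post_AE[OF pv]]) (auto simp: sqdist_split[OF d])




lemma post_upper:
  fixes e L T :: real and lam theta eta tau :: "nat \<Rightarrow> real" and Y :: "nat \<Rightarrow> real"
  assumes d: "summable (\<lambda>j. (theta j - eta j)\<^sup>2)"
    and pv: "\<And>j. 0 < post_var e lam tau j"
    and L: "0 \<le> L" and q: "\<And>j. j < m \<Longrightarrow> 2 * L * post_var e lam tau j < 1"
  shows "emeasure (post_measure e lam eta tau m Y) {v \<in> space (post_measure e lam eta tau m Y). T < sqdist2 v theta}
    \<le> ennreal (exp (L * (bias theta eta m - T))) *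
       (\<Prod>j<m. ennreal (exp (L * (post_mean e lam eta tau Y j - theta j)\<^sup>2 / (1 - 2 * L * post_var e lam tau j))
            / sqrt (1 - 2 * L * post_var e lam tau j)))"
proof -
  define M where "M = (\<lambda>j. if j < m
        then density lborel (normal_density (post_mean e lam eta tau Y j) (sqrt (post_var e lam tau j)))
        else return borel (eta j))"
  have PM: "post_measure e lam eta tau m Y = PiM UNIV M"
    unfolding post_measure_def M_def ..
  have P: "\<And>i. prob_space (M i)" unfolding M_def by (rule post_factor_prob[OF pv])
  have f: "(\<lambda>x. (x - theta j)\<^sup>2) \<in> borel_measurable (M j)" for j
    unfolding M_def by (cases "j < m") auto
  have sM: "sets (M j) = sets borel" for j unfolding M_def by (cases "j < m") auto
  have comp[measurable]: "(\<lambda>x. x j) \<in> borel_measurable (PiM UNIV M)" for j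
    using measurable_component_singleton[of j UNIV M] measurable_cong_sets[OF refl sM] by blast
  have "emeasure (post_measure e lam eta tau m Y) {v \<in> space (post_measure e lam eta tau m Y). T < sqdist2 v theta}
     \<le> emeasure (post_measure e lam eta tau m Y)
        {v \<in> space (post_measure e lam eta tau m Y). T < (\<Sum>j<m. (v j - theta j)\<^sup>2) + bias theta eta m}"
    by (rule post_tail[OF d pv]) (unfold PM, measurable)
  also have "\<dots> \<le> ennreal (exp (L * (bias theta eta m - T))) * (\<Prod>j<m. \<integral>\<^sup>+x. ennreal (exp (L * (x - theta j)\<^sup>2)) \<partial>M j)"
    unfolding PM by (rule markov_upper[OF P L f])
  also have "(\<Prod>j<m. \<integral>\<^sup>+x. ennreal (exp (L * (x - theta j)\<^sup>2)) \<partial>M j)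
     = (\<Prod>j<m. ennreal (exp (L * (post_mean e lam eta tau Y j - theta j)\<^sup>2 / (1 - 2 * L * post_var e lam tau j))
            / sqrt (1 - 2 * L * post_var e lam tau j)))"
  proof (rule prod.cong[OF refl])
    fix j assume j: "j \<in> {..<m}"
    have s: "0 < sqrt (post_var e lam tau j)" using pv by simp
    have q': "0 < 1 - 2 * L * 1\<^sup>2 * (sqrt (post_var e lam tau j))\<^sup>2" using q[of j] j pv[of j] by simp
    have eq: "(- theta j + 1 * x) = (x - theta j)" for x by simp
    have eq2: "(- theta j + 1 * post_mean e lam eta tau Y j) = (post_mean e lam eta tau Y j - theta j)" by simp
    note g = gauss_mgf[OF s q', where a="- theta j" and mu="post_mean e lam eta tau Y j"]
    show "(\<integral>\<^sup>+x. ennreal (exp (L * (x - theta j)\<^sup>2)) \<partial>M j) = ennreal (exp (L * (post_mean e lam eta tau Y j - theta j)\<^sup>2 / (1 - 2 * L * post_var e lam tau j))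
            / sqrt (1 - 2 * L * post_var e lam tau j))"
      using g pv[of j] j unfolding eq eq2 by (simp add: M_def)
  qed
  finally show ?thesis .
qed

lemma post_lower:
  fixes e L T :: real and lam theta eta tau :: "nat \<Rightarrow> real" and Y :: "nat \<Rightarrow> real"
  assumes d: "summable (\<lambda>j. (theta j - eta j)\<^sup>2)"
    and pv: "\<And>j. 0 < post_var e lam tau j"
    and L: "0 \<le> L"
  shows "emeasure (post_measure e lam eta tau m Y) {v \<in> space (post_measure e lam eta tau m Y). sqdist2 v theta < T}
    \<le> ennreal (exp (L * (T - bias theta eta m))) *
       (\<Prod>j<m. ennreal (1 / sqrt (1 + 2 * L * post_var e lam tau j)))"
proof -
  define M where "M = (\<lambda>j. if j < m
        then density lborel (normal_density (post_mean e lam eta tau Y j) (sqrt (post_var e lam tau j)))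
        else return borel (eta j))"
  have PM: "post_measure e lam eta tau m Y = PiM UNIV M"
    unfolding post_measure_def M_def ..
  have P: "\<And>i. prob_space (M i)" unfolding M_def by (rule post_factor_prob[OF pv])
  have f: "(\<lambda>x. (x - theta j)\<^sup>2) \<in> borel_measurable (M j)" for j
    unfolding M_def by (cases "j < m") auto
  have sM: "sets (M j) = sets borel" for j unfolding M_def by (cases "j < m") auto
  have comp[measurable]: "(\<lambda>x. x j) \<in> borel_measurable (PiM UNIV M)" for j
    using measurable_component_singleton[of j UNIV M] measurable_cong_sets[OF refl sM] by blast
  have "emeasure (post_measure e lam eta tau m Y) {v \<in> space (post_measure e lam eta tau m Y). sqdist2 v theta < T}
     \<le> emeasure (post_measure e lam eta tau m Y)
        {v \<in> space (post_measure e lam eta tau m Y). (\<Sum>j<m. (v j - theta j)\<^sup>2) + bias theta eta m < T}"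
    by (rule post_tail[OF d pv, where P="\<lambda>t. t < T"]) (unfold PM, measurable)
  also have "\<dots> \<le> ennreal (exp (L * (T - bias theta eta m))) * (\<Prod>j<m. \<integral>\<^sup>+x. ennreal (exp ((- L) * (x - theta j)\<^sup>2)) \<partial>M j)"
    unfolding PM by (rule markov_lower[OF P L f])
  also have "(\<Prod>j<m. \<integral>\<^sup>+x. ennreal (exp ((- L) * (x - theta j)\<^sup>2)) \<partial>M j)
     \<le> (\<Prod>j<m. ennreal (1 / sqrt (1 + 2 * L * post_var e lam tau j)))"
  proof (rule prod_mono_ennreal)
    fix j assume j: "j \<in> {..<m}"
    have s: "0 < sqrt (post_var e lam tau j)" using pv by simp
    have q1: "0 < 1 + 2 * L * post_var e lam tau j" using L pv[of j] by (simp add: add_pos_nonneg)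
    have q': "0 < 1 - 2 * (- L) * 1\<^sup>2 * (sqrt (post_var e lam tau j))\<^sup>2" using q1 pv[of j] by simp
    have eq: "(- theta j + 1 * x) = (x - theta j)" for x by simp
    note g = gauss_mgf[OF s q', where a="- theta j" and mu="post_mean e lam eta tau Y j"]
    have "(\<integral>\<^sup>+x. ennreal (exp ((- L) * (x - theta j)\<^sup>2)) \<partial>M j)
      = ennreal (exp ((- L) * (- theta j + 1 * post_mean e lam eta tau Y j)\<^sup>2 / (1 - 2 * (- L) * 1\<^sup>2 * (sqrt (post_var e lam tau j))\<^sup>2))
            / sqrt (1 - 2 * (- L) * 1\<^sup>2 * (sqrt (post_var e lam tau j))\<^sup>2))"
      using g j unfolding eq by (simp add: M_def)
    also have "\<dots> \<le> ennreal (1 / sqrt (1 + 2 * L * post_var e lam tau j))"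
    proof (rule ennreal_leI)
      have "exp ((- L) * (- theta j + 1 * post_mean e lam eta tau Y j)\<^sup>2 / (1 + 2 * L * post_var e lam tau j)) \<le> 1"
        using L q1 by (simp add: divide_nonpos_pos mult_nonpos_nonneg)
      then show "exp ((- L) * (- theta j + 1 * post_mean e lam eta tau Y j)\<^sup>2 / (1 - 2 * (- L) * 1\<^sup>2 * (sqrt (post_var e lam tau j))\<^sup>2))
            / sqrt (1 - 2 * (- L) * 1\<^sup>2 * (sqrt (post_var e lam tau j))\<^sup>2) \<le> 1 / sqrt (1 + 2 * L * post_var e lam tau j)"
        using pv[of j] q1 by (simp add: divide_right_mono)
    qed
    finally show "(\<integral>\<^sup>+x. ennreal (exp ((- L) * (x - theta j)\<^sup>2)) \<partial>M j) \<le> \<dots>" .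
  qed
  finally show ?thesis by (simp add: mult_left_mono)
qed




lemma data_factor:
  fixes e \<tau> \<sigma> l L \<eta> \<theta> :: real
  assumes e: "0 < e" and tau: "0 < \<tau>" and hs: "\<sigma> * (l\<^sup>2 / e + 1 / \<tau>) = 1"
    and q1: "0 < 1 - 2 * L * \<sigma>" and qv: "0 < 1 - 2 * L * (\<sigma> + \<sigma>\<^sup>2 * l\<^sup>2 / e)"
  shows "(\<integral>\<^sup>+y. ennreal (exp (L * (\<sigma> * (\<eta> / \<tau> + l * y / e) - \<theta>)\<^sup>2 / (1 - 2 * L * \<sigma>)) / sqrt (1 - 2 * L * \<sigma>))
      \<partial>density lborel (normal_density (l * \<theta>) (sqrt e)))
    = ennreal (exp (L * (\<sigma> / \<tau> * (\<eta> - \<theta>))\<^sup>2 / (1 - 2 * L * (\<sigma> + \<sigma>\<^sup>2 * l\<^sup>2 / e)))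
        / sqrt (1 - 2 * L * (\<sigma> + \<sigma>\<^sup>2 * l\<^sup>2 / e)))"
proof -
  define q1v where "q1v = 1 - 2 * L * \<sigma>"
  define Q where "Q = 1 - 2 * L * (\<sigma> + \<sigma>\<^sup>2 * l\<^sup>2 / e)"
  define u where "u = L / q1v"
  define A where "A = \<sigma> * \<eta> / \<tau> - \<theta>"
  define B where "B = \<sigma> * l / e"
  define q' where "q' = 1 - 2 * u * B\<^sup>2 * (sqrt e)\<^sup>2"
  have q10: "0 < q1v" using q1 by (simp add: q1v_def)
  have Q0: "0 < Q" using qv by (simp add: Q_def)
  have QQ: "q1v * q' = Q"
    unfolding q'_def u_def B_def Q_def q1v_def using e q1 by (simp add: field_simps power2_eq_square)
  have q'0: "0 < q'" using QQ q10 Q0 by (metis zero_less_mult_pos)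
  have AB: "A + B * (l * \<theta>) = \<sigma> / \<tau> * (\<eta> - \<theta>)"
  proof -
    have "A + B * (l * \<theta>) - \<sigma> / \<tau> * (\<eta> - \<theta>) = \<theta> * (\<sigma> * (l\<^sup>2 / e + 1 / \<tau>) - 1)"
      unfolding A_def B_def using e tau by (simp add: field_simps power2_eq_square)
    then show ?thesis using hs by simp
  qed
  have pt: "ennreal (exp (L * (\<sigma> * (\<eta> / \<tau> + l * y / e) - \<theta>)\<^sup>2 / (1 - 2 * L * \<sigma>)) / sqrt (1 - 2 * L * \<sigma>))
     = ennreal (1 / sqrt q1v) * ennreal (exp (u * (A + B * y)\<^sup>2))" for y
  proof -
    have "\<sigma> * (\<eta> / \<tau> + l * y / e) - \<theta> = A + B * y" unfolding A_def B_def by (simp add: field_simps)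
    then show ?thesis using q10 unfolding u_def q1v_def
      by (simp add: ennreal_mult[symmetric] divide_inverse mult.commute mult.left_commute)
  qed
  have "(\<integral>\<^sup>+y. ennreal (exp (L * (\<sigma> * (\<eta> / \<tau> + l * y / e) - \<theta>)\<^sup>2 / (1 - 2 * L * \<sigma>)) / sqrt (1 - 2 * L * \<sigma>))
      \<partial>density lborel (normal_density (l * \<theta>) (sqrt e)))
    = (\<integral>\<^sup>+y. ennreal (1 / sqrt q1v) * ennreal (exp (u * (A + B * y)\<^sup>2)) \<partial>density lborel (normal_density (l * \<theta>) (sqrt e)))"
    by (simp only: pt)
  also have "\<dots> = ennreal (1 / sqrt q1v) * (\<integral>\<^sup>+y. ennreal (exp (u * (A + B * y)\<^sup>2)) \<partial>density lborel (normal_density (l * \<theta>) (sqrt e)))"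
    by (rule nn_integral_cmult) auto
  also have "\<dots> = ennreal (1 / sqrt q1v) * ennreal (exp (u * (A + B * (l * \<theta>))\<^sup>2 / q') / sqrt q')"
    unfolding q'_def using e q'0 by (subst gauss_mgf) (auto simp: q'_def)
  also have "\<dots> = ennreal (1 / sqrt q1v * (exp (u * (A + B * (l * \<theta>))\<^sup>2 / q') / sqrt q'))"
    using q10 q'0 by (subst ennreal_mult) auto
  also have "1 / sqrt q1v * (exp (u * (A + B * (l * \<theta>))\<^sup>2 / q') / sqrt q') = exp (L * (\<sigma> / \<tau> * (\<eta> - \<theta>))\<^sup>2 / Q) / sqrt Q"
  proof -
    have "u * (A + B * (l * \<theta>))\<^sup>2 / q' = L * (\<sigma> / \<tau> * (\<eta> - \<theta>))\<^sup>2 / Q"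
      unfolding AB u_def QQ[symmetric] using q10 q'0 by (simp add: field_simps)
    moreover have "sqrt q1v * sqrt q' = sqrt Q" using QQ by (simp add: real_sqrt_mult[symmetric])
    ultimately show ?thesis by (simp add: field_simps)
  qed
  finally show ?thesis by (simp add: Q_def)
qed




lemma E1:
  fixes x :: real assumes "0 \<le> x" "x \<le> 1/2"
  shows "1 / sqrt (1 - x) \<le> exp x"
proof -
  have "0 \<le> x * (1 - 2 * x)" using assms by simp
  then have "1 \<le> (1 - x) * (1 + 2 * x)" by (simp add: algebra_simps)
  also have "\<dots> \<le> (1 - x) * exp (2 * x)" using assms by (intro mult_left_mono) auto
  finally have h: "1 \<le> (1 - x) * exp (2 * x)" .
  have "exp (2 * x) = (exp x)\<^sup>2" by (simp add: power2_eq_square exp_add[symmetric])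
  then have "sqrt ((1 - x) * exp (2 * x)) = sqrt (1 - x) * exp x" by (simp add: real_sqrt_mult)
  then have "1 \<le> sqrt (1 - x) * exp x" using real_sqrt_le_mono[OF h] by simp
  moreover have "0 < sqrt (1 - x)" using assms by simp
  ultimately show ?thesis by (simp add: divide_le_eq mult.commute)
qed

lemma E2:
  fixes x :: real assumes "0 \<le> x" "x \<le> 1"
  shows "1 / sqrt (1 + x) \<le> exp (- x / 2 + x\<^sup>2 / 2)"
proof -
  have "x - x\<^sup>2 \<le> ln (1 + x)" by (rule ln_one_plus_pos_lower_bound) (use assms in auto)
  then have h: "exp (x - x\<^sup>2) \<le> 1 + x" using assms by (simp add: ln_ge_iff)
  have "exp (x - x\<^sup>2) = (exp ((x - x\<^sup>2)/2))\<^sup>2" by (simp add: power2_eq_square exp_add[symmetric])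
  then have s: "exp ((x - x\<^sup>2)/2) \<le> sqrt (1 + x)" using real_sqrt_le_mono[OF h] by simp
  have "1 = exp ((x - x\<^sup>2)/2) * exp (- x / 2 + x\<^sup>2 / 2)" by (simp add: exp_add[symmetric] field_simps)
  also have "\<dots> \<le> sqrt (1 + x) * exp (- x / 2 + x\<^sup>2 / 2)" using s by (intro mult_right_mono) auto
  finally have "1 \<le> sqrt (1 + x) * exp (- x / 2 + x\<^sup>2 / 2)" .
  moreover have "0 < sqrt (1 + x)" using assms by simp
  ultimately show ?thesis by (simp add: divide_le_eq mult.commute)
qed




lemma prod_upper_real:
  fixes \<sigma> w a :: "nat \<Rightarrow> real"
  assumes s0: "\<And>j. j < m \<Longrightarrow> 0 < \<sigma> j" and w0: "\<And>j. j < m \<Longrightarrow> 0 \<le> w j"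
    and ws: "\<And>j. j < m \<Longrightarrow> w j \<le> \<sigma> j" and sS: "\<And>j. j < m \<Longrightarrow> \<sigma> j \<le> S"
    and L: "0 \<le> L" and LS: "8 * L * S \<le> 1"
  shows "(\<Prod>j<m. exp (L * (a j)\<^sup>2 / (1 - 2 * L * (\<sigma> j + w j))) / sqrt (1 - 2 * L * (\<sigma> j + w j)))
    \<le> exp (2 * L * (\<Sum>j<m. (a j)\<^sup>2) + 4 * L * (\<Sum>j<m. \<sigma> j))"
proof -
  have "(\<Prod>j<m. exp (L * (a j)\<^sup>2 / (1 - 2 * L * (\<sigma> j + w j))) / sqrt (1 - 2 * L * (\<sigma> j + w j)))
     \<le> (\<Prod>j<m. exp (2 * L * (a j)\<^sup>2 + 4 * L * \<sigma> j))"
  proof (rule prod_mono, rule conjI)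
    fix j assume j: "j \<in> {..<m}"
    define Q where "Q = 1 - 2 * L * (\<sigma> j + w j)"
    have a: "4 * L * \<sigma> j \<le> 1/2"
    proof -
      have "L * \<sigma> j \<le> L * S" using sS[of j] j L by (simp add: mult_left_mono)
      then show ?thesis using LS by simp
    qed
    have b: "0 \<le> 4 * L * \<sigma> j" using L s0[of j] j by simp
    have Qge: "1 - 4 * L * \<sigma> j \<le> Q"
    proof -
      have "L * w j \<le> L * \<sigma> j" using ws[of j] j L by (simp add: mult_left_mono)
      then show ?thesis unfolding Q_def by (simp add: algebra_simps)
    qed
    have Q0: "1/2 \<le> Q" using Qge a by simp
    have e1: "exp (L * (a j)\<^sup>2 / Q) \<le> exp (2 * L * (a j)\<^sup>2)"
    proof -
      have "L * (a j)\<^sup>2 / Q \<le> L * (a j)\<^sup>2 / (1/2)"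
        using Q0 L by (intro divide_left_mono) auto
      then show ?thesis by simp
    qed
    have e2: "1 / sqrt Q \<le> exp (4 * L * \<sigma> j)"
    proof -
      have "1 / sqrt Q \<le> 1 / sqrt (1 - 4 * L * \<sigma> j)"
        using Qge a by (intro divide_left_mono real_sqrt_le_mono mult_pos_pos) auto
      also have "\<dots> \<le> exp (4 * L * \<sigma> j)" by (rule E1[OF b a])
      finally show ?thesis .
    qed
    have "exp (L * (a j)\<^sup>2 / Q) / sqrt Q = exp (L * (a j)\<^sup>2 / Q) * (1 / sqrt Q)" by simp
    also have "\<dots> \<le> exp (2 * L * (a j)\<^sup>2) * exp (4 * L * \<sigma> j)"
      using e1 e2 Q0 by (intro mult_mono) auto
    finally show "exp (L * (a j)\<^sup>2 / (1 - 2 * L * (\<sigma> j + w j))) / sqrt (1 - 2 * L * (\<sigma> j + w j))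
        \<le> exp (2 * L * (a j)\<^sup>2 + 4 * L * \<sigma> j)" unfolding Q_def by (simp add: exp_add)
    show "0 \<le> exp (L * (a j)\<^sup>2 / (1 - 2 * L * (\<sigma> j + w j))) / sqrt (1 - 2 * L * (\<sigma> j + w j))"
      using Q0 unfolding Q_def by simp
  qed
  also have "\<dots> = exp (2 * L * (\<Sum>j<m. (a j)\<^sup>2) + 4 * L * (\<Sum>j<m. \<sigma> j))"
    by (simp add: exp_sum[symmetric] sum.distrib sum_distrib_left)
  finally show ?thesis .
qed

lemma prod_lower_real:
  fixes \<sigma> :: "nat \<Rightarrow> real"
  assumes s0: "\<And>j. j < m \<Longrightarrow> 0 < \<sigma> j" and sS: "\<And>j. j < m \<Longrightarrow> \<sigma> j \<le> S"
    and L: "0 \<le> L" and LS: "2 * L * S \<le> 1"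
  shows "(\<Prod>j<m. 1 / sqrt (1 + 2 * L * \<sigma> j)) \<le> exp (- L * (\<Sum>j<m. \<sigma> j) + 2 * L\<^sup>2 * S * (\<Sum>j<m. \<sigma> j))"
proof -
  have "(\<Prod>j<m. 1 / sqrt (1 + 2 * L * \<sigma> j)) \<le> (\<Prod>j<m. exp (- L * \<sigma> j + 2 * L\<^sup>2 * S * \<sigma> j))"
  proof (rule prod_mono, rule conjI)
    fix j assume j: "j \<in> {..<m}"
    have x0: "0 \<le> 2 * L * \<sigma> j" using L s0[of j] j by simp
    have LsS: "L * \<sigma> j \<le> L * S" using sS[of j] j L by (simp add: mult_left_mono)
    have x1: "2 * L * \<sigma> j \<le> 1" using LsS LS by simp
    have "1 / sqrt (1 + 2 * L * \<sigma> j) \<le> exp (- (2 * L * \<sigma> j) / 2 + (2 * L * \<sigma> j)\<^sup>2 / 2)"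
      by (rule E2[OF x0 x1])
    also have "\<dots> \<le> exp (- L * \<sigma> j + 2 * L\<^sup>2 * S * \<sigma> j)"
    proof -
      have "(L * \<sigma> j) * (L * \<sigma> j) \<le> (L * S) * (L * \<sigma> j)"
        using LsS L s0[of j] j by (intro mult_right_mono) auto
      then show ?thesis by (simp add: power2_eq_square algebra_simps)
    qed
    finally show "1 / sqrt (1 + 2 * L * \<sigma> j) \<le> exp (- L * \<sigma> j + 2 * L\<^sup>2 * S * \<sigma> j)" .
    show "0 \<le> 1 / sqrt (1 + 2 * L * \<sigma> j)" using x0 by simp
  qed
  also have "\<dots> = (\<Prod>j<m. exp ((2 * L\<^sup>2 * S - L) * \<sigma> j))"
    by (intro prod.cong) (auto simp: algebra_simps)
  also have "\<dots> = exp ((2 * L\<^sup>2 * S - L) * (\<Sum>j<m. \<sigma> j))"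
    by (simp add: exp_sum sum_distrib_left)
  also have "\<dots> = exp (- L * (\<Sum>j<m. \<sigma> j) + 2 * L\<^sup>2 * S * (\<Sum>j<m. \<sigma> j))"
    by (simp add: algebra_simps)
  finally show ?thesis .
qed




lemma pv_pos: "0 < e \<Longrightarrow> 0 < tau j \<Longrightarrow> 0 < post_var e lam tau j"
  unfolding post_var_def by (simp add: add_nonneg_pos)

lemma pv_hs: "0 < e \<Longrightarrow> 0 < tau j \<Longrightarrow> post_var e lam tau j * ((lam j)\<^sup>2 / e + 1 / tau j) = 1"
proof -
  assume e: "0 < e" and t: "0 < tau j"
  have "0 < (lam j)\<^sup>2 / e + 1 / tau j" using e t by (simp add: add_nonneg_pos)
  then show ?thesis unfolding post_var_def by (simp add: inverse_eq_divide)
qed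

lemma data_prob: "0 < e \<Longrightarrow> prob_space (density lborel (normal_density (lam j * theta j) (sqrt e)))"
  by (rule prob_space_normal_density) simp

lemma data_upper:
  fixes e L T :: real and lam theta eta tau :: "nat \<Rightarrow> real"
  assumes d: "summable (\<lambda>j. (theta j - eta j)\<^sup>2)"
    and e: "0 < e" and tau: "\<And>j. 0 < tau j" and L: "0 \<le> L"
    and q1: "\<And>j. j < m \<Longrightarrow> 0 < 1 - 2 * L * post_var e lam tau j"
    and qv: "\<And>j. j < m \<Longrightarrow> 0 < 1 - 2 * L * (post_var e lam tau j + (post_var e lam tau j)\<^sup>2 * (lam j)\<^sup>2 / e)"
  shows "(\<integral>\<^sup>+Y. emeasure (post_measure e lam eta tau m Y) {v \<in> space (post_measure e lam eta tau m Y). T < sqdist2 v theta}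
      \<partial>data_measure e lam theta)
    \<le> ennreal (exp (L * (bias theta eta m - T)) *
        (\<Prod>j<m. exp (L * (post_var e lam tau j / tau j * (eta j - theta j))\<^sup>2
            / (1 - 2 * L * (post_var e lam tau j + (post_var e lam tau j)\<^sup>2 * (lam j)\<^sup>2 / e)))
          / sqrt (1 - 2 * L * (post_var e lam tau j + (post_var e lam tau j)\<^sup>2 * (lam j)\<^sup>2 / e))))"
proof -
  let ?s = "\<lambda>j. post_var e lam tau j"
  define G where "G = (\<lambda>j y. ennreal (exp (L * (?s j * (eta j / tau j + lam j * y / e) - theta j)\<^sup>2 / (1 - 2 * L * ?s j))
          / sqrt (1 - 2 * L * ?s j)))"
  define D where "D = (\<lambda>j. density lborel (normal_density (lam j * theta j) (sqrt e)))"
  have pv: "\<And>j. 0 < ?s j" using pv_pos[OF e tau] .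
  have "(\<integral>\<^sup>+Y. emeasure (post_measure e lam eta tau m Y) {v \<in> space (post_measure e lam eta tau m Y). T < sqdist2 v theta}
      \<partial>data_measure e lam theta)
    \<le> (\<integral>\<^sup>+Y. ennreal (exp (L * (bias theta eta m - T))) * (\<Prod>j<m. G j (Y j)) \<partial>PiM UNIV D)"
  proof (unfold data_measure_def D_def[symmetric], rule nn_integral_mono)
    fix Y :: "nat \<Rightarrow> real"
    show "emeasure (post_measure e lam eta tau m Y) {v \<in> space (post_measure e lam eta tau m Y). T < sqdist2 v theta}
      \<le> ennreal (exp (L * (bias theta eta m - T))) * (\<Prod>j<m. G j (Y j))"
      using post_upper[OF d pv L, where m=m and T=T and Y=Y] q1 unfolding G_def post_mean_def by (simp add: algebra_simps)
  qed
  also have "\<dots> = ennreal (exp (L * (bias theta eta m - T))) * (\<integral>\<^sup>+Y. (\<Prod>j<m. G j (Y j)) \<partial>PiM UNIV D)"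
  proof (rule nn_integral_cmult, rule borel_measurable_prod_ennreal)
    fix j :: nat
    have "(\<lambda>x. x j) \<in> borel_measurable (PiM UNIV D)"
      using measurable_component_singleton[of j UNIV D] by (simp add: D_def)
    then show "(\<lambda>Y. G j (Y j)) \<in> borel_measurable (PiM UNIV D)" unfolding G_def by measurable
  qed
  also have "(\<integral>\<^sup>+Y. (\<Prod>j<m. G j (Y j)) \<partial>PiM UNIV D) = (\<Prod>j<m. \<integral>\<^sup>+y. G j y \<partial>D j)"
    by (rule nn_integral_PiM_prod) (auto simp: D_def data_prob[OF e] G_def)
  also have "\<dots> = (\<Prod>j<m. ennreal (exp (L * (?s j / tau j * (eta j - theta j))\<^sup>2
            / (1 - 2 * L * (?s j + (?s j)\<^sup>2 * (lam j)\<^sup>2 / e)))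
          / sqrt (1 - 2 * L * (?s j + (?s j)\<^sup>2 * (lam j)\<^sup>2 / e))))"
  proof (rule prod.cong[OF refl])
    fix j assume j: "j \<in> {..<m}"
    show "(\<integral>\<^sup>+y. G j y \<partial>D j) = ennreal (exp (L * (?s j / tau j * (eta j - theta j))\<^sup>2
            / (1 - 2 * L * (?s j + (?s j)\<^sup>2 * (lam j)\<^sup>2 / e)))
          / sqrt (1 - 2 * L * (?s j + (?s j)\<^sup>2 * (lam j)\<^sup>2 / e)))"
      unfolding G_def D_def
      by (rule data_factor[OF e tau pv_hs[OF e tau]]) (use q1 qv j in auto)
  qed
  also have "\<dots> = ennreal (\<Prod>j<m. exp (L * (?s j / tau j * (eta j - theta j))\<^sup>2
            / (1 - 2 * L * (?s j + (?s j)\<^sup>2 * (lam j)\<^sup>2 / e)))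
          / sqrt (1 - 2 * L * (?s j + (?s j)\<^sup>2 * (lam j)\<^sup>2 / e)))" (is "_ = ennreal ?P")
    by (rule prod_ennreal) (use qv in \<open>auto intro: less_imp_le\<close>)
  finally have fin: "(\<integral>\<^sup>+Y. emeasure (post_measure e lam eta tau m Y) {v \<in> space (post_measure e lam eta tau m Y). T < sqdist2 v theta}
      \<partial>data_measure e lam theta) \<le> ennreal (exp (L * (bias theta eta m - T))) * ennreal ?P" .
  have P0: "0 \<le> ?P"
  proof (rule prod_nonneg)
    fix j assume "j \<in> {..<m}"
    then show "0 \<le> exp (L * (?s j / tau j * (eta j - theta j))\<^sup>2
            / (1 - 2 * L * (?s j + (?s j)\<^sup>2 * (lam j)\<^sup>2 / e)))
          / sqrt (1 - 2 * L * (?s j + (?s j)\<^sup>2 * (lam j)\<^sup>2 / e))"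
      using qv[of j] by simp
  qed
  show ?thesis using fin ennreal_mult[OF exp_ge_zero P0, of "L * (bias theta eta m - T)"] by simp
qed

lemma data_lower:
  fixes e L T :: real and lam theta eta tau :: "nat \<Rightarrow> real"
  assumes d: "summable (\<lambda>j. (theta j - eta j)\<^sup>2)"
    and e: "0 < e" and tau: "\<And>j. 0 < tau j" and L: "0 \<le> L"
  shows "(\<integral>\<^sup>+Y. emeasure (post_measure e lam eta tau m Y) {v \<in> space (post_measure e lam eta tau m Y). sqdist2 v theta < T}
      \<partial>data_measure e lam theta)
    \<le> ennreal (exp (L * (T - bias theta eta m)) * (\<Prod>j<m. 1 / sqrt (1 + 2 * L * post_var e lam tau j)))"
proof -
  have pv: "\<And>j. 0 < post_var e lam tau j" using pv_pos[OF e tau] .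
  interpret D: prob_space "data_measure e lam theta"
    unfolding data_measure_def by (rule prob_space_PiM) (rule data_prob[OF e])
  have "(\<integral>\<^sup>+Y. emeasure (post_measure e lam eta tau m Y) {v \<in> space (post_measure e lam eta tau m Y). sqdist2 v theta < T}
      \<partial>data_measure e lam theta)
    \<le> (\<integral>\<^sup>+Y. ennreal (exp (L * (T - bias theta eta m))) * (\<Prod>j<m. ennreal (1 / sqrt (1 + 2 * L * post_var e lam tau j)))
      \<partial>data_measure e lam theta)"
    by (rule nn_integral_mono) (rule post_lower[OF d pv L])
  also have "\<dots> = ennreal (exp (L * (T - bias theta eta m))) * (\<Prod>j<m. ennreal (1 / sqrt (1 + 2 * L * post_var e lam tau j)))"
    by (simp add: D.emeasure_space_1)
  also have "\<dots> = ennreal (exp (L * (T - bias theta eta m)) * (\<Prod>j<m. 1 / sqrt (1 + 2 * L * post_var e lam tau j)))"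
  proof -
    have nn: "\<And>j. 0 \<le> 1 / sqrt (1 + 2 * L * post_var e lam tau j)"
      using L pv by (simp add: less_imp_le add_nonneg_nonneg)
    have pe: "(\<Prod>j<m. ennreal (1 / sqrt (1 + 2 * L * post_var e lam tau j))) = ennreal (\<Prod>j<m. 1 / sqrt (1 + 2 * L * post_var e lam tau j))"
      by (rule prod_ennreal) (rule nn)
    show ?thesis unfolding pe by (rule ennreal_mult[symmetric]) (auto intro: prod_nonneg nn)
  qed
  finally show ?thesis .
qed




theorem mainTheorem3:
  fixes lam theta eta :: "nat \<Rightarrow> real"
    and tau :: "real \<Rightarrow> nat \<Rightarrow> real"
    and m :: "real \<Rightarrow> nat"
    and eps_theta K eps c :: real
  assumes lam_bdd: "\<exists>B. \<forall>j. \<bar>lam j\<bar> \<le> B"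
    and lam_nz: "\<And>j. lam j \<noteq> 0"
    and theta_l2: "summable (\<lambda>j. (theta j)\<^sup>2)"
    and diff_l2: "summable (\<lambda>j. (theta j - eta j)\<^sup>2)"
    and tau_pos: "\<And>e j. 0 < e \<Longrightarrow> e < 1 \<Longrightarrow> 0 < tau e j"
    and P: "assumption_P lam theta eta tau m eps_theta K"
    and eps: "0 < eps" "eps < eps_theta"
    and c: "0 < c" "c < 1 / (8 * K)"
  shows
    "(\<integral>\<^sup>+ Y. emeasure (post_measure eps lam eta (tau eps) (m eps) Y)
         {v \<in> space (post_measure eps lam eta (tau eps) (m eps) Y).
            sqdist2 v theta > (4 + 11 / 2 * K) *
              max (bias theta eta (m eps)) (sigma_bar eps lam (tau eps) (m eps))}
       \<partial>data_measure eps lam theta) \<le> ennreal (2 * exp (- real (m eps) / 36))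
   \<and> (\<integral>\<^sup>+ Y. emeasure (post_measure eps lam eta (tau eps) (m eps) Y)
         {v \<in> space (post_measure eps lam eta (tau eps) (m eps) Y).
            sqdist2 v theta < (1 - 8 * c * K) *
              max (bias theta eta (m eps)) (sigma_bar eps lam (tau eps) (m eps))}
       \<partial>data_measure eps lam theta) \<le> ennreal (2 * exp (- c\<^sup>2 * real (m eps) / 2))"
proof -
  have Pd: "0 < eps_theta" "eps_theta < 1" "1 \<le> K"
    and Pb: "\<And>e. e \<in> {0<..<eps_theta} \<Longrightarrow>
        max (r_term e lam theta eta (tau e) (m e)) (real (m e) * sigma_max e lam (tau e) (m e))
        / max (bias theta eta (m e)) (sigma_bar e lam (tau e) (m e)) \<le> K"
    using P unfolding assumption_P_def by auto
  have e0: "0 < eps" and e1: "eps < 1" using eps Pd by auto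
  define tt where "tt = tau eps"
  define mm where "mm = m eps"
  have tt: "\<And>j. 0 < tt j" unfolding tt_def using tau_pos e0 e1 by auto
  define s where "s = (\<lambda>j. post_var eps lam tt j)"
  have s0: "\<And>j. 0 < s j" unfolding s_def by (rule pv_pos[OF e0 tt])
  have hs: "\<And>j. s j * ((lam j)\<^sup>2 / eps + 1 / tt j) = 1" unfolding s_def by (rule pv_hs[OF e0 tt])
  have wle: "\<And>j. (s j)\<^sup>2 * (lam j)\<^sup>2 / eps \<le> s j"
  proof -
    fix j
    have "s j * ((lam j)\<^sup>2 / eps) \<le> s j * ((lam j)\<^sup>2 / eps + 1 / tt j)"
      using s0[of j] tt[of j] by (intro mult_left_mono) auto
    then have "s j * ((lam j)\<^sup>2 / eps) \<le> 1" using hs[of j] by simp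
    then have "s j * (s j * ((lam j)\<^sup>2 / eps)) \<le> s j * 1" using s0[of j] by (intro mult_left_mono) auto
    then show "(s j)\<^sup>2 * (lam j)\<^sup>2 / eps \<le> s j" by (simp add: power2_eq_square)
  qed
  have w0: "\<And>j. 0 \<le> (s j)\<^sup>2 * (lam j)\<^sup>2 / eps" using e0 by simp
  define b where "b = bias theta eta mm"
  define sb where "sb = sigma_bar eps lam tt mm"
  define r where "r = r_term eps lam theta eta tt mm"
  define smax where "smax = sigma_max eps lam tt mm"
  define Mx where "Mx = max b sb"
  have b0: "0 \<le> b" unfolding b_def by (rule bias_nonneg[OF diff_l2])
  have sb_eq: "sb = (\<Sum>j<mm. s j)" unfolding sb_def sigma_bar_def s_def ..
  have r_eq: "r = (\<Sum>j<mm. (s j / tt j * (eta j - theta j))\<^sup>2)"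
    unfolding r_def r_term_def s_def by (intro sum.cong) (auto simp: power_mult_distrib inverse_eq_divide power_divide)
  have ssmax: "\<And>j. j < mm \<Longrightarrow> s j \<le> smax"
    unfolding smax_def sigma_max_def s_def by (rule Max_ge) auto
  have sb0: "0 \<le> sb" unfolding sb_eq using s0 by (simp add: sum_nonneg less_imp_le)
  have Mx0: "0 \<le> Mx" unfolding Mx_def using b0 by simp
  have KM: "r \<le> K * Mx \<and> real mm * smax \<le> K * Mx" if mm0: "0 < mm"
  proof -
    have "0 < sb" unfolding sb_eq using s0 mm0 by (intro sum_pos) auto
    then have Mpos: "0 < Mx" unfolding Mx_def by simp
    have "max r (real mm * smax) / Mx \<le> K"
      using Pb[of eps] eps unfolding r_def smax_def b_def sb_def Mx_def mm_def tt_def by auto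
    then have "max r (real mm * smax) \<le> K * Mx" using Mpos by (simp add: divide_le_eq)
    then show ?thesis by simp
  qed
  have smax0: "0 < smax" if "0 < mm" using ssmax[of 0] s0[of 0] that by simp
  have Kpos: "0 < K" using Pd by simp
  have cK: "8 * c * K < 1" using c Kpos by (simp add: field_simps)
  
  have up: "(\<integral>\<^sup>+ Y. emeasure (post_measure eps lam eta tt mm Y)
         {v \<in> space (post_measure eps lam eta tt mm Y). (4 + 11 / 2 * K) * Mx < sqdist2 v theta}
       \<partial>data_measure eps lam theta) \<le> ennreal (2 * exp (- real mm / 36))"
  proof (cases "mm = 0")
    case True
    have "(\<integral>\<^sup>+ Y. emeasure (post_measure eps lam eta tt mm Y)
         {v \<in> space (post_measure eps lam eta tt mm Y). (4 + 11 / 2 * K) * Mx < sqdist2 v theta}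
       \<partial>data_measure eps lam theta) \<le> ennreal (exp (0 * (b - (4 + 11 / 2 * K) * Mx)) * (\<Prod>j<mm. 1))"
      unfolding b_def using data_upper[OF diff_l2 e0 tt order.refl, where m=mm and T="(4 + 11 / 2 * K) * Mx" and lam=lam]
      using True by simp
    also have "\<dots> \<le> ennreal (2 * exp (- real mm / 36))" using True by simp
    finally show ?thesis .
  next
    case False
    then have mm0: "0 < mm" by simp
    note KMm = KM[OF mm0]
    have sm0: "0 < smax" by (rule smax0[OF mm0])
    define L where "L = 1 / (8 * smax)"
    have L0: "0 \<le> L" unfolding L_def using sm0 by simp
    have LS: "8 * L * smax = 1" unfolding L_def using sm0 by simp
    have Ls: "L * s j \<le> 1 / 8" if "j < mm" for j
    proof -
      have "L * s j \<le> L * smax" using ssmax[OF that] L0 by (intro mult_left_mono) auto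
      then show ?thesis using LS by simp
    qed
    have q1: "0 < 1 - 2 * L * post_var eps lam tt j" if "j < mm" for j
      using Ls[OF that] unfolding s_def by simp
    have qv: "0 < 1 - 2 * L * (post_var eps lam tt j + (post_var eps lam tt j)\<^sup>2 * (lam j)\<^sup>2 / eps)" if "j < mm" for j
    proof -
      have "L * ((s j)\<^sup>2 * (lam j)\<^sup>2 / eps) \<le> L * s j" using wle[of j] L0 by (intro mult_left_mono) auto
      then show ?thesis using Ls[OF that] unfolding s_def by (simp add: algebra_simps)
    qed
    have "(\<integral>\<^sup>+ Y. emeasure (post_measure eps lam eta tt mm Y)
         {v \<in> space (post_measure eps lam eta tt mm Y). (4 + 11 / 2 * K) * Mx < sqdist2 v theta}
       \<partial>data_measure eps lam theta) \<le> ennreal (exp (L * (b - (4 + 11 / 2 * K) * Mx)) *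
        (\<Prod>j<mm. exp (L * (s j / tt j * (eta j - theta j))\<^sup>2
            / (1 - 2 * L * (s j + (s j)\<^sup>2 * (lam j)\<^sup>2 / eps)))
          / sqrt (1 - 2 * L * (s j + (s j)\<^sup>2 * (lam j)\<^sup>2 / eps))))"
      unfolding b_def s_def by (rule data_upper[OF diff_l2 e0 tt L0 q1 qv])
    also have "\<dots> \<le> ennreal (2 * exp (- real mm / 36))"
    proof (rule ennreal_leI)
      have pr: "(\<Prod>j<mm. exp (L * (s j / tt j * (eta j - theta j))\<^sup>2
            / (1 - 2 * L * (s j + (s j)\<^sup>2 * (lam j)\<^sup>2 / eps)))
          / sqrt (1 - 2 * L * (s j + (s j)\<^sup>2 * (lam j)\<^sup>2 / eps)))
          \<le> exp (2 * L * r + 4 * L * sb)"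
        unfolding r_eq sb_eq
        by (rule prod_upper_real[where a="\<lambda>j. s j / tt j * (eta j - theta j)"])
           (use s0 w0 wle ssmax L0 LS in auto)
      have key: "L * (b - (4 + 11 / 2 * K) * Mx) + (2 * L * r + 4 * L * sb) \<le> - real mm / 36"
      proof -
        have bM: "b \<le> Mx" "sb \<le> Mx" unfolding Mx_def by auto
        have "b - (4 + 11 / 2 * K) * Mx + 2 * r + 4 * sb \<le> Mx - (4 + 11 / 2 * K) * Mx + 2 * (K * Mx) + 4 * Mx"
          using bM KMm by linarith
        also have "\<dots> \<le> - (5/2) * (K * Mx)"
        proof -
          have "1 * Mx \<le> K * Mx" using mult_right_mono[OF Pd(3) Mx0] .
          then show ?thesis by (simp add: algebra_simps)
        qed
        also have "\<dots> \<le> - (5/2) * (real mm * smax)" using KMm by linarith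
        finally have h: "b - (4 + 11 / 2 * K) * Mx + 2 * r + 4 * sb \<le> - (5/2) * (real mm * smax)" .
        have "L * (b - (4 + 11 / 2 * K) * Mx) + (2 * L * r + 4 * L * sb)
            = L * (b - (4 + 11 / 2 * K) * Mx + 2 * r + 4 * sb)" by (simp add: algebra_simps)
        also have "\<dots> \<le> L * (- (5/2) * (real mm * smax))" using h L0 by (intro mult_left_mono) auto
        also have "\<dots> = - (5/16) * real mm" unfolding L_def using sm0 by (simp add: field_simps)
        also have "\<dots> \<le> - real mm / 36" by simp
        finally show ?thesis .
      qed
      have "exp (L * (b - (4 + 11 / 2 * K) * Mx)) *
        (\<Prod>j<mm. exp (L * (s j / tt j * (eta j - theta j))\<^sup>2
            / (1 - 2 * L * (s j + (s j)\<^sup>2 * (lam j)\<^sup>2 / eps)))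
          / sqrt (1 - 2 * L * (s j + (s j)\<^sup>2 * (lam j)\<^sup>2 / eps)))
        \<le> exp (L * (b - (4 + 11 / 2 * K) * Mx)) * exp (2 * L * r + 4 * L * sb)"
        using pr by (intro mult_left_mono) auto
      also have "\<dots> = exp (L * (b - (4 + 11 / 2 * K) * Mx) + (2 * L * r + 4 * L * sb))" by (simp add: exp_add)
      also have "\<dots> \<le> exp (- real mm / 36)" using key by simp
      also have "\<dots> \<le> 2 * exp (- real mm / 36)" by simp
      finally show "exp (L * (b - (4 + 11 / 2 * K) * Mx)) *
        (\<Prod>j<mm. exp (L * (s j / tt j * (eta j - theta j))\<^sup>2
            / (1 - 2 * L * (s j + (s j)\<^sup>2 * (lam j)\<^sup>2 / eps)))
          / sqrt (1 - 2 * L * (s j + (s j)\<^sup>2 * (lam j)\<^sup>2 / eps)))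
        \<le> 2 * exp (- real mm / 36)" .
    qed
    finally show ?thesis .
  qed
  
  have low: "(\<integral>\<^sup>+ Y. emeasure (post_measure eps lam eta tt mm Y)
         {v \<in> space (post_measure eps lam eta tt mm Y). sqdist2 v theta < (1 - 8 * c * K) * Mx}
       \<partial>data_measure eps lam theta) \<le> ennreal (2 * exp (- c\<^sup>2 * real mm / 2))"
  proof -
    have gen: "(\<integral>\<^sup>+ Y. emeasure (post_measure eps lam eta tt mm Y)
         {v \<in> space (post_measure eps lam eta tt mm Y). sqdist2 v theta < (1 - 8 * c * K) * Mx}
       \<partial>data_measure eps lam theta) \<le> ennreal (exp (L * ((1 - 8 * c * K) * Mx - b)) * (\<Prod>j<mm. 1 / sqrt (1 + 2 * L * s j)))"
      if L0: "0 \<le> L" for L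
      unfolding b_def s_def by (rule data_lower[OF diff_l2 e0 tt L0])
    have pr1: "(\<Prod>j<mm. 1 / sqrt (1 + 2 * L * s j)) \<le> 1" if L0: "0 \<le> L" for L
    proof (rule prod_le_1)
      fix j assume "j \<in> {..<mm}"
      have "1 \<le> 1 + 2 * L * s j" using L0 s0[of j] by simp
      then show "0 \<le> 1 / sqrt (1 + 2 * L * s j) \<and> 1 / sqrt (1 + 2 * L * s j) \<le> 1" by simp
    qed
    show ?thesis
    proof (cases "sb \<le> b")
      case True
      then have MB: "Mx = b" unfolding Mx_def by simp
      show ?thesis
      proof (cases "mm = 0")
        case True
        have "(\<integral>\<^sup>+ Y. emeasure (post_measure eps lam eta tt mm Y)
         {v \<in> space (post_measure eps lam eta tt mm Y). sqdist2 v theta < (1 - 8 * c * K) * Mx}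
          \<partial>data_measure eps lam theta) \<le> ennreal (exp (0 * ((1 - 8 * c * K) * Mx - b)) * (\<Prod>j<mm. 1 / sqrt (1 + 2 * 0 * s j)))"
          by (rule gen) simp
        also have "\<dots> \<le> ennreal (2 * exp (- c\<^sup>2 * real mm / 2))" using True by simp
        finally show ?thesis .
      next
        case False
        then have mm0: "0 < mm" by simp
        have "0 < sb" unfolding sb_eq using s0 mm0 by (intro sum_pos) auto
        then have bpos: "0 < b" using True by simp
        define L where "L = c * real mm / (16 * K * b)"
        have L0: "0 \<le> L" unfolding L_def using c Kpos bpos by simp
        have "(\<integral>\<^sup>+ Y. emeasure (post_measure eps lam eta tt mm Y)
         {v \<in> space (post_measure eps lam eta tt mm Y). sqdist2 v theta < (1 - 8 * c * K) * Mx}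
          \<partial>data_measure eps lam theta) \<le> ennreal (exp (L * ((1 - 8 * c * K) * Mx - b)) * (\<Prod>j<mm. 1 / sqrt (1 + 2 * L * s j)))"
          by (rule gen[OF L0])
        also have "\<dots> \<le> ennreal (2 * exp (- c\<^sup>2 * real mm / 2))"
        proof (rule ennreal_leI)
          have ex: "L * ((1 - 8 * c * K) * Mx - b) = - c\<^sup>2 * real mm / 2"
            unfolding MB L_def using bpos Kpos by (simp add: field_simps power2_eq_square)
          have "exp (L * ((1 - 8 * c * K) * Mx - b)) * (\<Prod>j<mm. 1 / sqrt (1 + 2 * L * s j))
              \<le> exp (L * ((1 - 8 * c * K) * Mx - b)) * 1"
            using pr1[OF L0] by (intro mult_left_mono) auto
          also have "\<dots> \<le> 2 * exp (- c\<^sup>2 * real mm / 2)" unfolding ex by simp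
          finally show "exp (L * ((1 - 8 * c * K) * Mx - b)) * (\<Prod>j<mm. 1 / sqrt (1 + 2 * L * s j))
              \<le> 2 * exp (- c\<^sup>2 * real mm / 2)" .
        qed
        finally show ?thesis .
      qed
    next
      case False
      then have MS: "Mx = sb" unfolding Mx_def by simp
      have mm0: "0 < mm"
      proof (rule ccontr)
        assume "\<not> 0 < mm" then have "sb = 0" unfolding sb_eq by simp
        then show False using False b0 by simp
      qed
      note KMm = KM[OF mm0]
      have sm0: "0 < smax" by (rule smax0[OF mm0])
      define L where "L = 2 * c * K / smax"
      have L0: "0 \<le> L" unfolding L_def using c Kpos sm0 by simp
      have LS: "2 * L * smax \<le> 1" unfolding L_def using sm0 cK by simp
      have "(\<integral>\<^sup>+ Y. emeasure (post_measure eps lam eta tt mm Y)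
         {v \<in> space (post_measure eps lam eta tt mm Y). sqdist2 v theta < (1 - 8 * c * K) * Mx}
          \<partial>data_measure eps lam theta) \<le> ennreal (exp (L * ((1 - 8 * c * K) * Mx - b)) * (\<Prod>j<mm. 1 / sqrt (1 + 2 * L * s j)))"
        by (rule gen[OF L0])
      also have "\<dots> \<le> ennreal (2 * exp (- c\<^sup>2 * real mm / 2))"
      proof (rule ennreal_leI)
        have pr: "(\<Prod>j<mm. 1 / sqrt (1 + 2 * L * s j)) \<le> exp (- L * sb + 2 * L\<^sup>2 * smax * sb)"
          unfolding sb_eq by (rule prod_lower_real) (use s0 ssmax L0 LS in auto)
        have key: "L * ((1 - 8 * c * K) * Mx - b) + (- L * sb + 2 * L\<^sup>2 * smax * sb) \<le> - c\<^sup>2 * real mm / 2"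
        proof -
          have "L * ((1 - 8 * c * K) * Mx - b) \<le> L * ((1 - 8 * c * K) * sb)"
            unfolding MS using L0 b0 by (intro mult_left_mono) auto
          then have "L * ((1 - 8 * c * K) * Mx - b) + (- L * sb + 2 * L\<^sup>2 * smax * sb)
              \<le> L * ((1 - 8 * c * K) * sb) + (- L * sb + 2 * L\<^sup>2 * smax * sb)" by simp
          also have "\<dots> = - 8 * c\<^sup>2 * K\<^sup>2 * sb / smax"
            unfolding L_def using sm0 by (simp add: field_simps power2_eq_square)
          also have "\<dots> \<le> - 8 * c\<^sup>2 * K * real mm"
          proof -
            have "real mm * smax \<le> K * sb" using KMm MS by simp
            then have "K * real mm \<le> K * K * sb / smax" using sm0 Kpos
              by (simp add: field_simps)
            then have "8 * c\<^sup>2 * (K * real mm) \<le> 8 * c\<^sup>2 * (K * K * sb / smax)"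
              by (intro mult_left_mono) auto
            then show ?thesis by (simp add: power2_eq_square algebra_simps)
          qed
          also have "\<dots> \<le> - c\<^sup>2 * real mm / 2"
          proof -
            have x0: "0 \<le> c\<^sup>2 * real mm" by simp
            have "(c\<^sup>2 * real mm) * 1 \<le> (c\<^sup>2 * real mm) * (16 * K)"
              using Pd by (intro mult_left_mono[OF _ x0]) auto
            then have "c\<^sup>2 * real mm / 2 \<le> 8 * (c\<^sup>2 * real mm) * K" by simp
            then show ?thesis by (simp add: algebra_simps)
          qed
          finally show ?thesis .
        qed
        have "exp (L * ((1 - 8 * c * K) * Mx - b)) * (\<Prod>j<mm. 1 / sqrt (1 + 2 * L * s j))
            \<le> exp (L * ((1 - 8 * c * K) * Mx - b)) * exp (- L * sb + 2 * L\<^sup>2 * smax * sb)"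
          using pr by (intro mult_left_mono) auto
        also have "\<dots> = exp (L * ((1 - 8 * c * K) * Mx - b) + (- L * sb + 2 * L\<^sup>2 * smax * sb))"
          by (simp add: exp_add)
        also have "\<dots> \<le> exp (- c\<^sup>2 * real mm / 2)" using key by simp
        also have "\<dots> \<le> 2 * exp (- c\<^sup>2 * real mm / 2)" by simp
        finally show "exp (L * ((1 - 8 * c * K) * Mx - b)) * (\<Prod>j<mm. 1 / sqrt (1 + 2 * L * s j))
            \<le> 2 * exp (- c\<^sup>2 * real mm / 2)" .
      qed
      finally show ?thesis .
    qed
  qed
  show ?thesis
    using up low unfolding Mx_def b_def sb_def tt_def mm_def by simp
qed


end
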